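(* Let $(F,v)$ be a Krasner valued hyperfield whose norm $\rho_v$ has trivial invariance group, i.e. $\mathrm{ig}(\rho_v)=\{0\}$. Then $\mathcal{O}_v=\{x\in F: x-x\subseteq 1-1\}$.
   Context: A hyperfield is $(F,+,\cdot,0,1)$ with $+$ a multivalued operation making $(F,+,0)$ a canonical hypergroup (associative, commutative, unique inverses $-x$ with $0\in x+(-x)$, and $z\in x+y\Rightarrow y\in z+(-x)$; write $x-y:=x+(-y)$, $A+B:=\bigcup_{a\in A,b\in B}a+b$), $(F,\cdot)$ commutative with $0$ absorbing, $x(y+z)=xy+xz$, and $F\setminus\{0\}$ an abelian group with neutral $1\neq0$. Valuation on $F$: for an ordered abelian group $\Gamma$ and $\infty>\Gamma$ with $\gamma+\infty=\infty+\gamma=\infty$, a surjective map $v:F\to\Gamma\cup\{\infty\}$ with $vx=\infty\iff x=0$, $v(xy)=vx+vy$, $z\in x+y\Rightarrow vz\ge\min\{vx,vy\}$; $vF:=v(F\setminus\{0\})$, $\mathcal{O}_v:=\{x:vx\ge0\}$. An initial segment of $\Gamma$ is $\rho\subseteq\Gamma$ with $\delta\in\rho,\gamma<\delta\Rightarrow\gamma\in\rho$; $\rho+\gamma:=\{\delta+\gamma:\delta\in\rho\}$; "$\alpha>\rho+\gamma$" means $\alpha\notin\rho+\gamma$; $\mathrm{ig}(\rho):=\{\gamma\in\Gamma:\rho+\gamma=\rho\}$. Krasner valued hyperfield: a valued hyperfield $(F,v)$ such that (KVH1) for all $x,y\in F$ with $0\notin x+y$, $v(x+y)$ is a singleton;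 (KVH2) there is an initial segment $\rho_v$ of $vF$ with $0\in\rho_v$ (the norm) such that for all $x,y,z,t\in F$ with $z\in x+y$: $t\in x+y$ iff $vs>\rho_v+\min\{vx,vy\}$ for all $s\in z-t$. *)

theory Defs
  imports Main
begin

(* A hyperfield is given on the whole type 'a by a multivalued addition add,
   a multiplication mul, and constants zero, one. *)

definition set_add :: "('a \<Rightarrow> 'a \<Rightarrow> 'a set) \<Rightarrow> 'a set \<Rightarrow> 'a set \<Rightarrow> 'a set" where
  "set_add add A B = (\<Union>a\<in>A. \<Union>b\<in>B. add a b)"

definition hneg :: "('a \<Rightarrow> 'a \<Rightarrow> 'a set) \<Rightarrow> 'a \<Rightarrow> 'a \<Rightarrow> 'a" where
  "hneg add zero x = (THE y. zero \<in> add x y)"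

definition hsub :: "('a \<Rightarrow> 'a \<Rightarrow> 'a set) \<Rightarrow> 'a \<Rightarrow> 'a \<Rightarrow> 'a \<Rightarrow> 'a set" where
  "hsub add zero x y = add x (hneg add zero y)"

definition canonical_hypergroup :: "('a \<Rightarrow> 'a \<Rightarrow> 'a set) \<Rightarrow> 'a \<Rightarrow> bool" where
  "canonical_hypergroup add zero \<longleftrightarrow>
     (\<forall>x y. add x y \<noteq> {}) \<and>
     (\<forall>x y z. set_add add (add x y) {z} = set_add add {x} (add y z)) \<and>
     (\<forall>x y. add x y = add y x) \<and>
     (\<forall>x. add zero x = {x}) \<and>
     (\<forall>x. \<exists>!y. zero \<in> add x y) \<and>
     (\<forall>x y z. z \<in> add x y \<longrightarrow> y \<in> add z (hneg add zero x))"

definition hyperfield ::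
  "('a \<Rightarrow> 'a \<Rightarrow> 'a set) \<Rightarrow> ('a \<Rightarrow> 'a \<Rightarrow> 'a) \<Rightarrow> 'a \<Rightarrow> 'a \<Rightarrow> bool" where
  "hyperfield add mul zero one \<longleftrightarrow>
     canonical_hypergroup add zero \<and>
     (\<forall>x y. mul x y = mul y x) \<and>
     (\<forall>x y z. mul (mul x y) z = mul x (mul y z)) \<and>
     (\<forall>x. mul zero x = zero) \<and>
     (\<forall>x y z. mul x ` add y z = set_add add {mul x y} {mul x z}) \<and>
     one \<noteq> zero \<and>
     (\<forall>x y. x \<noteq> zero \<longrightarrow> y \<noteq> zero \<longrightarrow> mul x y \<noteq> zero) \<and>
     (\<forall>x. mul one x = x) \<and>
     (\<forall>x. x \<noteq> zero \<longrightarrow> (\<exists>y. y \<noteq> zero \<and> mul x y = one))"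

(* Values in \<Gamma> \<union> {\<infinity>} are represented as 'g option, None = \<infinity>. *)
fun ext_le :: "'g::linorder option \<Rightarrow> 'g option \<Rightarrow> bool" where
  "ext_le _ None = True"
| "ext_le None (Some _) = False"
| "ext_le (Some a) (Some b) = (a \<le> b)"

fun ext_min :: "'g::linorder option \<Rightarrow> 'g option \<Rightarrow> 'g option" where
  "ext_min None b = b"
| "ext_min a None = a"
| "ext_min (Some a) (Some b) = Some (min a b)"

definition valuation ::
  "('a \<Rightarrow> 'a \<Rightarrow> 'a set) \<Rightarrow> ('a \<Rightarrow> 'a \<Rightarrow> 'a) \<Rightarrow> 'a \<Rightarrow> 'a \<Rightarrow>
   ('a \<Rightarrow> 'g::linordered_ab_group_add option) \<Rightarrow> bool" where
  "valuation add mul zero one v \<longleftrightarrow>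
     surj v \<and>
     (\<forall>x. v x = None \<longleftrightarrow> x = zero) \<and>
     (\<forall>x y a b. v x = Some a \<longrightarrow> v y = Some b \<longrightarrow> v (mul x y) = Some (a + b)) \<and>
     (\<forall>x y z. z \<in> add x y \<longrightarrow> ext_le (ext_min (v x) (v y)) (v z))"

definition valued_hyperfield ::
  "('a \<Rightarrow> 'a \<Rightarrow> 'a set) \<Rightarrow> ('a \<Rightarrow> 'a \<Rightarrow> 'a) \<Rightarrow> 'a \<Rightarrow> 'a \<Rightarrow>
   ('a \<Rightarrow> 'g::linordered_ab_group_add option) \<Rightarrow> bool" where
  "valued_hyperfield add mul zero one v \<longleftrightarrow>
     hyperfield add mul zero one \<and> valuation add mul zero one v"

(* initial segment of \<Gamma> (= vF by surjectivity) *)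
definition initial_segment :: "'g::linorder set \<Rightarrow> bool" where
  "initial_segment \<rho> \<longleftrightarrow> (\<forall>\<delta> \<gamma>. \<delta> \<in> \<rho> \<longrightarrow> \<gamma> < \<delta> \<longrightarrow> \<gamma> \<in> \<rho>)"

definition seg_shift :: "'g::ab_group_add set \<Rightarrow> 'g \<Rightarrow> 'g set" where
  "seg_shift \<rho> \<gamma> = (\<lambda>\<delta>. \<delta> + \<gamma>) ` \<rho>"

(* "\<alpha> > \<rho> + \<gamma>" means \<alpha> \<notin> \<rho> + \<gamma>; for \<alpha> = \<infinity> this always holds *)
fun above_seg :: "'g::ab_group_add option \<Rightarrow> 'g set \<Rightarrow> 'g \<Rightarrow> bool" where
  "above_seg None \<rho> \<gamma> = True"
| "above_seg (Some a) \<rho> \<gamma> = (a \<notin> seg_shift \<rho> \<gamma>)"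

definition ig :: "'g::ab_group_add set \<Rightarrow> 'g set" where
  "ig \<rho> = {\<gamma>. seg_shift \<rho> \<gamma> = \<rho>}"

(* KVH2 for a given norm \<rho>.  Only pairs x, y not both zero are quantified,
   since then min{vx,vy} is a finite value. *)
definition krasner_norm ::
  "('a \<Rightarrow> 'a \<Rightarrow> 'a set) \<Rightarrow> 'a \<Rightarrow> ('a \<Rightarrow> 'g::linordered_ab_group_add option) \<Rightarrow> 'g set \<Rightarrow> bool" where
  "krasner_norm add zero v \<rho> \<longleftrightarrow>
     initial_segment \<rho> \<and> 0 \<in> \<rho> \<and>
     (\<forall>x y z t m. z \<in> add x y \<longrightarrow> ext_min (v x) (v y) = Some m \<longrightarrow>
        (t \<in> add x y \<longleftrightarrow> (\<forall>s \<in> hsub add zero z t. above_seg (v s) \<rho> m)))"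

definition KVH1 ::
  "('a \<Rightarrow> 'a \<Rightarrow> 'a set) \<Rightarrow> 'a \<Rightarrow> ('a \<Rightarrow> 'g option) \<Rightarrow> bool" where
  "KVH1 add zero v \<longleftrightarrow> (\<forall>x y. zero \<notin> add x y \<longrightarrow> (\<exists>a. v ` add x y = {a}))"

definition krasner_valued_hyperfield ::
  "('a \<Rightarrow> 'a \<Rightarrow> 'a set) \<Rightarrow> ('a \<Rightarrow> 'a \<Rightarrow> 'a) \<Rightarrow> 'a \<Rightarrow> 'a \<Rightarrow>
   ('a \<Rightarrow> 'g::linordered_ab_group_add option) \<Rightarrow> 'g set \<Rightarrow> bool" where
  "krasner_valued_hyperfield add mul zero one v \<rho> \<longleftrightarrow>
     valued_hyperfield add mul zero one v \<and> KVH1 add zero v \<and> krasner_norm add zero v \<rho>"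

definition val_ring :: "('a \<Rightarrow> 'g::linordered_ab_group_add option) \<Rightarrow> 'a set" where
  "val_ring v = {x. ext_le (Some 0) (v x)}"

end

theory Submission
  imports Defs
begin

lemma hneg_props:
  assumes "canonical_hypergroup add zero"
  shows "zero \<in> add x (hneg add zero x)" and "zero \<in> add x y \<Longrightarrow> y = hneg add zero x"
proof -
  have ex0: "\<forall>x. \<exists>!y. zero \<in> add x y" using assms unfolding canonical_hypergroup_def by (elim conjE) assumption
  have ex: "\<exists>!y. zero \<in> add x y" using ex0 by (rule spec)
  show "zero \<in> add x (hneg add zero x)" unfolding hneg_def using theI'[OF ex] .
  show "zero \<in> add x y \<Longrightarrow> y = hneg add zero x" unfolding hneg_def
    by (rule the1_equality[OF ex, symmetric])
qed

lemma double_zero: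
  fixes b :: "'g::linordered_ab_group_add"
  assumes "b + b = 0" shows "b = 0"
proof (rule ccontr)
  assume "b \<noteq> 0"
  then consider "b > 0" | "b < 0" by fastforce
  then show False
  proof cases
    case 1 then have "b + b > 0" by (simp add: add_pos_pos)
    then show False using assms by simp
  next
    case 2 then have "b + b < 0" by (simp add: add_neg_neg)
    then show False using assms by simp
  qed
qed

theorem corollary6p4:
  fixes add :: "'a \<Rightarrow> 'a \<Rightarrow> 'a set" and mul :: "'a \<Rightarrow> 'a \<Rightarrow> 'a"
    and zero one :: 'a and v :: "'a \<Rightarrow> 'g::linordered_ab_group_add option"
    and \<rho> :: "'g set"
  assumes "krasner_valued_hyperfield add mul zero one v \<rho>"
    and "ig \<rho> = {0}"
  shows "val_ring v = {x. hsub add zero x x \<subseteq> hsub add zero one one}"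
proof -
  have HF: "hyperfield add mul zero one"
    using assms(1) unfolding krasner_valued_hyperfield_def valued_hyperfield_def by (elim conjE) assumption
  have VA: "valuation add mul zero one v"
    using assms(1) unfolding krasner_valued_hyperfield_def valued_hyperfield_def by (elim conjE) assumption
  have KN: "krasner_norm add zero v \<rho>"
    using assms(1) unfolding krasner_valued_hyperfield_def valued_hyperfield_def by (elim conjE) assumption
  have CH: "canonical_hypergroup add zero" using HF unfolding hyperfield_def by (elim conjE) assumption
  have comm: "\<forall>x y. add x y = add y x" using CH unfolding canonical_hypergroup_def by (elim conjE) assumption
  note comm = comm[rule_format]
  have add0: "\<forall>x. add zero x = {x}" using CH unfolding canonical_hypergroup_def by (elim conjE) assumption
  note add0 = add0[rule_format]
  have mulc: "\<forall>x y. mul x y = mul y x" using HF unfolding hyperfield_def by (elim conjE) assumption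
  note mulc = mulc[rule_format]
  have mul0: "\<forall>x. mul zero x = zero" using HF unfolding hyperfield_def by (elim conjE) assumption
  note mul0 = mul0[rule_format]
  have mul1: "\<forall>x. mul one x = x" using HF unfolding hyperfield_def by (elim conjE) assumption
  note mul1 = mul1[rule_format]
  have one0: "one \<noteq> zero" using HF unfolding hyperfield_def by (elim conjE) assumption
  have distr: "\<forall>x y z. mul x ` add y z = set_add add {mul x y} {mul x z}"
    using HF unfolding hyperfield_def by (elim conjE) assumption
  note distr = distr[rule_format]
  have surj: "surj v" using VA unfolding valuation_def by (elim conjE) assumption
  have vN: "\<forall>x. v x = None \<longleftrightarrow> x = zero" using VA unfolding valuation_def by (elim conjE) assumption
  note vN = vN[rule_format]
  have vmul: "\<forall>x y a b. v x = Some a \<longrightarrow> v y = Some b \<longrightarrow> v (mul x y) = Some (a + b)"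
    using VA unfolding valuation_def by (elim conjE) assumption
  note vmul = vmul[rule_format]
  have init: "initial_segment \<rho>" using KN unfolding krasner_norm_def by (elim conjE) assumption
  have K: "\<forall>x y z t m. z \<in> add x y \<longrightarrow> ext_min (v x) (v y) = Some m \<longrightarrow>
        (t \<in> add x y \<longleftrightarrow> (\<forall>s \<in> hsub add zero z t. above_seg (v s) \<rho> m))"
    using KN unfolding krasner_norm_def by (elim conjE) assumption
  note K = K[rule_format]
  note N1 = hneg_props(1)[OF CH] and N2 = hneg_props(2)[OF CH]
  define n where "n = hneg add zero"
  have negmul: "n x = mul x (n one)" for x
  proof -
    have "zero \<in> add one (n one)" using N1 n_def by simp
    then have "mul x zero \<in> mul x ` add one (n one)" by blast
    moreover have "mul x zero = zero" using mulc[of x zero] mul0 by simp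
    moreover have "mul x one = x" using mulc[of x one] mul1 by simp
    moreover have "mul x ` add one (n one) = add (mul x one) (mul x (n one))"
      using distr[of x one "n one"] by (simp add: set_add_def)
    ultimately have "zero \<in> add x (mul x (n one))" by simp
    then show ?thesis using N2 n_def by simp
  qed
  have nn: "n (n x) = x" for x
    using N1[of x] N2[of "n x" x] comm n_def by simp
  have n0: "n zero = zero" using N2[of zero zero] add0 n_def by simp
  obtain a where va: "v one = Some a" using vN one0 by (cases "v one") auto
  have "v one = Some (a + a)" using vmul[OF va va] mul1 by simp
  then have "a = 0" using va by simp
  then have v1: "v one = Some 0" using va by simp
  have n1nz: "n one \<noteq> zero"
  proof
    assume "n one = zero"
    then have "zero \<in> add one zero" using N1[of one] n_def by simp
    then show False using add0 comm one0 by auto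
  qed
  obtain b where vb: "v (n one) = Some b" using vN n1nz by (cases "v (n one)") auto
  have "mul (n one) (n one) = one" using negmul[of "n one"] nn[of one] by metis
  then have "b + b = 0" using vmul[OF vb vb] v1 by simp
  then have "b = 0" by (rule double_zero)
  then have vb0: "v (n one) = Some 0" using vb by simp
  have vn: "v (n x) = v x" for x
  proof (cases "x = zero")
    case True then show ?thesis using n0 by simp
  next
    case False
    then obtain g where "v x = Some g" using vN by (cases "v x") auto
    then have "v (mul x (n one)) = Some (g + 0)" using vmul[OF _ vb0] by blast
    then show ?thesis using negmul[of x] \<open>v x = Some g\<close> by simp
  qed
  have char: "hsub add zero x x = {t. above_seg (v t) \<rho> g}" if vx: "v x = Some g" for x g
  proof -
    have z: "zero \<in> add x (n x)" using N1 n_def by simp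
    have m: "ext_min (v x) (v (n x)) = Some g" using vx vn by simp
    have hs: "hsub add zero zero t = {n t}" for t using add0 n_def by (simp add: hsub_def)
    show ?thesis
      using K[OF z m] hs vn by (auto simp: hsub_def n_def)
  qed
  have seg0: "seg_shift \<rho> 0 = \<rho>" by (simp add: seg_shift_def)
  show ?thesis
  proof (intro set_eqI iffI; simp)
    fix x assume xr: "x \<in> val_ring v"
    show "hsub add zero x x \<subseteq> hsub add zero one one"
    proof (cases "v x")
      case None
      then have "x = zero" using vN by simp
      then have "hsub add zero x x = {zero}" using n0 add0 by (simp add: hsub_def n_def)
      moreover have "zero \<in> hsub add zero one one" using N1 by (simp add: hsub_def)
      ultimately show ?thesis by simp
    next
      case (Some g)
      then have g0: "g \<ge> 0" using xr by (simp add: val_ring_def)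
      show ?thesis unfolding char[OF Some] char[OF v1]
      proof (clarify)
        fix t assume at: "above_seg (v t) \<rho> g"
        show "above_seg (v t) \<rho> 0"
        proof (cases "v t")
          case (Some c)
          have "c \<notin> \<rho>"
          proof
            assume "c \<in> \<rho>"
            moreover have "c - g \<le> c" using g0 by simp
            ultimately have "c - g \<in> \<rho>" using init unfolding initial_segment_def
              by (metis order_le_less)
            then have "c \<in> seg_shift \<rho> g" unfolding seg_shift_def
              by (metis diff_add_cancel imageI)
            then show False using at Some by simp
          qed
          then show ?thesis using Some seg0 by simp
        qed simp
      qed
    qed
  next
    fix x assume sub: "hsub add zero x x \<subseteq> hsub add zero one one"
    show "x \<in> val_ring v"
    proof (cases "v x")
      case None then show ?thesis by (simp add: val_ring_def)
    next
      case (Some g)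
      show ?thesis
      proof (rule ccontr)
        assume "x \<notin> val_ring v"
        then have gneg: "g < 0" using Some by (simp add: val_ring_def)
        have sub2: "{t. above_seg (v t) \<rho> g} \<subseteq> {t. above_seg (v t) \<rho> 0}"
          using sub char[OF Some] char[OF v1] by simp
        have A: "\<rho> \<subseteq> seg_shift \<rho> g"
        proof
          fix d assume d: "d \<in> \<rho>"
          obtain t where vt: "v t = Some d" using surj by (metis surjD)
          show "d \<in> seg_shift \<rho> g"
          proof (rule ccontr)
            assume "d \<notin> seg_shift \<rho> g"
            then have "t \<in> {t. above_seg (v t) \<rho> g}" using vt by simp
            then have "above_seg (v t) \<rho> 0" using sub2 by blast
            then show False using vt d seg0 by simp
          qed
        qed
        have B: "seg_shift \<rho> g \<subseteq> \<rho>"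
        proof
          fix e assume "e \<in> seg_shift \<rho> g"
          then obtain d where d: "d \<in> \<rho>" "e = d + g" unfolding seg_shift_def by blast
          have "d + g < d" using gneg by simp
          then show "e \<in> \<rho>" using d init unfolding initial_segment_def by blast
        qed
        have "g \<in> ig \<rho>" using A B unfolding ig_def by blast
        then show False using assms(2) gneg by simp
      qed
    qed
  qed
qed

end
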